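(* Let $(G,\tau)$ be a (Hausdorff) topological abelian group which contains a non-trivial converging sequence. Then $\operatorname{asdim}(G,\mathcal{S}_\tau)=\infty$.
   Context: $\mathcal{S}_\tau$ is the smallest group ideal on $G$ containing every set $\{x\}\cup\{x_n:n\in\omega\}$ where $(x_n)$ converges to $x$ in $(G,\tau)$. A group ideal on $G$ is a family of subsets containing all finite subsets and closed under subsets and under $(A,B)\mapsto A-B$; it defines the coarse structure on $G$ with base $\{\{(x,y):x\in A+y\}:A\in\mathcal{I}\}$, and $(G,\mathcal{I})$ denotes $G$ with this coarse structure. A converging sequence is non-trivial if it is not eventually constant. For an entourage $E$, $E[x]=\{y:(x,y)\in E\}$, $E[A]=\bigcup_{a\in A}E[a]$. $\operatorname{asdim}(X,\mathcal{E})\ge n$ means: for each $E\in\mathcal{E}$ there exist $F\in\mathcal{E}$ and a covering $\mathcal{M}$ of $X$ with each member contained in some $F[x]$, partitioned as $\mathcal{M}_0\cup\dots\cup\mathcal{M}_n$ with each $\mathcal{M}_i$ $E$-disjoint ($E[A]\cap E[B]=\emptyset$ for distinct $A,B$); $\operatorname{asdim}=\infty$ if this holds for every $n$. *)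

theory Defs
  imports "HOL-Analysis.Analysis" "HOL-Library.Extended_Nat"
begin

definition group_ideal :: "'a::ab_group_add set set \<Rightarrow> bool" where
  "group_ideal I \<longleftrightarrow>
     (\<forall>A. finite A \<longrightarrow> A \<in> I) \<and>
     (\<forall>A\<in>I. \<forall>B. B \<subseteq> A \<longrightarrow> B \<in> I) \<and>
     (\<forall>A\<in>I. \<forall>B\<in>I. {a - b | a b. a \<in> A \<and> b \<in> B} \<in> I)"

definition S_tau :: "'a::ab_group_add topology \<Rightarrow> 'a set set" where
  "S_tau X = \<Inter>{I. group_ideal I \<and>
      (\<forall>f x. limitin X f x sequentially \<longrightarrow> insert x (range f) \<in> I)}"

definition ideal_coarse :: "'a::ab_group_add set set \<Rightarrow> ('a \<times> 'a) set set" where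
  "ideal_coarse I = {E. \<exists>A\<in>I. E \<subseteq> {(x, y). x - y \<in> A}}"

definition asdim_le :: "'a set \<Rightarrow> ('a \<times> 'a) set set \<Rightarrow> nat \<Rightarrow> bool" where
  "asdim_le X \<E> n \<longleftrightarrow>
     (\<forall>E\<in>\<E>. \<exists>F\<in>\<E>. \<exists>M :: nat \<Rightarrow> 'a set set.
        \<Union>(\<Union>i\<le>n. M i) = X \<and>
        (\<forall>i\<le>n. \<forall>A\<in>M i. \<exists>x. A \<subseteq> F `` {x}) \<and>
        (\<forall>i\<le>n. \<forall>A\<in>M i. \<forall>B\<in>M i. A \<noteq> B \<longrightarrow> E `` A \<inter> E `` B = {}))"

definition asdim :: "'a set \<Rightarrow> ('a \<times> 'a) set set \<Rightarrow> enat" where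
  "asdim X \<E> = (INF n \<in> {n. asdim_le X \<E> n}. enat n)"

end

theory Submission
  imports Defs "HOL-Library.Ramsey"
begin

locale tgrp =
  fixes X :: "'a::ab_group_add topology"
  assumes top: "topspace X = UNIV"
    and addc: "continuous_map (prod_topology X X) X (\<lambda>(x, y). x + y)"
    and negc: "continuous_map X X uminus"
    and haus: "Hausdorff_space X"
begin

lemma lim_add:
  assumes "limitin X f a F" "limitin X g b F"
  shows "limitin X (\<lambda>k. f k + g k) (a + b) F"
proof -
  have "limitin (prod_topology X X) (\<lambda>k. (f k, g k)) (a, b) F"
    using assms by (simp add: limitin_pairwise o_def)
  from continuous_map_limit[OF addc this] show ?thesis by (simp add: o_def)
qed

lemma lim_neg:
  assumes "limitin X f a F"
  shows "limitin X (\<lambda>k. - f k) (- a) F"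
  using continuous_map_limit[OF negc assms] by (simp add: o_def)

lemma lim_diff:
  assumes "limitin X f a F" "limitin X g b F"
  shows "limitin X (\<lambda>k. f k - g k) (a - b) F"
  using lim_add[OF assms(1) lim_neg[OF assms(2)]] by simp

lemma lim_const: "limitin X (\<lambda>k. c) c F"
  by (simp add: top)

lemma lim_sum:
  fixes m :: nat
  assumes "\<And>i. i < m \<Longrightarrow> limitin X (\<lambda>k. f k i) (l i) F"
  shows "limitin X (\<lambda>k. \<Sum>i<m. f k i) (\<Sum>i<m. l i) F"
  using assms
proof (induction m)
  case 0
  then show ?case by (simp add: top)
next
  case (Suc m)
  then show ?case by (simp add: lim_add)
qed

lemma lim_unique:
  assumes "limitin X f a sequentially" "limitin X f b sequentially"
  shows "a = b"
  using limitin_Hausdorff_unique[OF assms _ haus] by simp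

lemma inj_conv:
  assumes s: "limitin X s c sequentially" and h: "inj h"
    and hv: "\<And>k. h k \<in> insert c (range s)"
  shows "limitin X h c sequentially"
  unfolding limitin_def
proof (intro conjI allI impI)
  show "c \<in> topspace X" by (simp add: top)
  fix U assume U: "openin X U \<and> c \<in> U"
  then have "eventually (\<lambda>n. s n \<in> U) sequentially" using s limitinD by fastforce
  then obtain N where N: "\<And>n. n \<ge> N \<Longrightarrow> s n \<in> U" by (auto simp: eventually_sequentially)
  let ?B = "{k. h k \<notin> U}"
  have "h ` ?B \<subseteq> s ` {..<N}"
  proof
    fix z assume "z \<in> h ` ?B"
    then obtain k where k: "h k \<notin> U" "z = h k" by auto
    then have "h k \<noteq> c" using U by auto
    with hv[of k] obtain n where "h k = s n" by auto
    have "n < N" using k N \<open>h k = s n\<close> by (metis not_le)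
    with \<open>h k = s n\<close> k show "z \<in> s ` {..<N}" by auto
  qed
  then have "finite (h ` ?B)" by (meson finite_imageI finite_lessThan finite_subset)
  then have "finite ?B" using h by (meson finite_imageD inj_on_subset subset_UNIV)
  then obtain M where "\<And>k. k \<in> ?B \<Longrightarrow> k < M" by (meson finite_nat_bounded lessThan_iff subsetD)
  then show "eventually (\<lambda>k. h k \<in> U) sequentially"
    unfolding eventually_sequentially by (meson mem_Collect_eq not_le)
qed

end

definition seqset :: "'a topology \<Rightarrow> 'a set \<Rightarrow> bool" where
  "seqset X K \<longleftrightarrow> (\<exists>f c. limitin X f c sequentially \<and> K = insert c (range f))"

definition sumset :: "'a::comm_monoid_add set list \<Rightarrow> 'a set" where
  "sumset Ks = {(\<Sum>i<length Ks. r i) | r. \<forall>i<length Ks. r i \<in> Ks ! i}"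

definition JJ :: "'a::ab_group_add topology \<Rightarrow> 'a set set" where
  "JJ X = {A. \<exists>Ks. (\<forall>K\<in>set Ks. seqset X K) \<and> A \<subseteq> sumset Ks}"

lemma sum_split_nat:
  fixes f :: "nat \<Rightarrow> 'a::comm_monoid_add"
  shows "(\<Sum>i<m+l. f i) = (\<Sum>i<m. f i) + (\<Sum>i<l. f (m+i))"
  by (induction l) (simp_all add: ac_simps)

lemma sumset_append:
  assumes "a \<in> sumset Ks" "b \<in> sumset Ls"
  shows "a + b \<in> sumset (Ks @ Ls)"
proof -
  obtain r where r: "a = (\<Sum>i<length Ks. r i)" "\<forall>i<length Ks. r i \<in> Ks ! i"
    using assms(1) unfolding sumset_def by auto
  obtain r' where r': "b = (\<Sum>i<length Ls. r' i)" "\<forall>i<length Ls. r' i \<in> Ls ! i"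
    using assms(2) unfolding sumset_def by auto
  define q where "q i = (if i < length Ks then r i else r' (i - length Ks))" for i
  have "(\<Sum>i<length (Ks @ Ls). q i) = (\<Sum>i<length Ks. q i) + (\<Sum>i<length Ls. q (length Ks + i))"
    by (simp add: sum_split_nat)
  also have "\<dots> = a + b" using r r' by (simp add: q_def)
  finally have e: "(\<Sum>i<length (Ks @ Ls). q i) = a + b" .
  have "\<forall>i<length (Ks @ Ls). q i \<in> (Ks @ Ls) ! i"
    using r(2) r'(2) by (auto simp: q_def nth_append)
  with e show ?thesis unfolding sumset_def mem_Collect_eq by (intro exI[of _ q]) auto
qed

lemma sumset_neg:
  fixes b :: "'a::ab_group_add"
  assumes "b \<in> sumset Ls"
  shows "- b \<in> sumset (map ((`) uminus) Ls)"
proof -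
  obtain r' where r': "b = (\<Sum>i<length Ls. r' i)" "\<forall>i<length Ls. r' i \<in> Ls ! i"
    using assms unfolding sumset_def by auto
  have "- b = (\<Sum>i<length Ls. - r' i)" using r' by (simp add: sum_negf)
  moreover have "\<forall>i<length (map ((`) uminus) Ls). - r' i \<in> (map ((`) uminus) Ls) ! i"
    using r'(2) by auto
  ultimately show ?thesis unfolding sumset_def by auto
qed

lemma sumset_single: "sumset [K] = K"
proof
  show "sumset [K] \<subseteq> K" unfolding sumset_def by auto
  show "K \<subseteq> sumset [K]"
  proof
    fix z assume "z \<in> K"
    then show "z \<in> sumset [K]" unfolding sumset_def mem_Collect_eq
      by (intro exI[of _ "\<lambda>_. z"]) auto
  qed
qed

context tgrp
begin

lemma seqset_neg: "seqset X K \<Longrightarrow> seqset X (uminus ` K)"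
  unfolding seqset_def
proof (elim exE conjE)
  fix f c assume "limitin X f c sequentially" "K = insert c (range f)"
  then show "\<exists>f c. limitin X f c sequentially \<and> uminus ` K = insert c (range f)"
    by (intro exI[of _ "\<lambda>k. - f k"] exI[of _ "- c"]) (auto simp: lim_neg)
qed

lemma finite_in_JJ:
  assumes "finite A"
  shows "A \<in> JJ X"
proof (cases "A = {}")
  case True
  then show ?thesis unfolding JJ_def by (intro CollectI exI[of _ "[]"]) auto
next
  case False
  obtain xs where xs: "set xs = A" using assms finite_list by blast
  with False have ne: "xs \<noteq> []" by auto
  define f where "f n = (if n < length xs then xs ! n else xs ! 0)" for n
  have lim: "limitin X f (xs ! 0) sequentially"
    by (rule limitin_eventually) (auto simp: top f_def eventually_sequentially intro!: exI[of _ "length xs"])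
  have "insert (xs ! 0) (range f) = A"
  proof
    show "insert (xs ! 0) (range f) \<subseteq> A" using ne xs by (auto simp: f_def)
    show "A \<subseteq> insert (xs ! 0) (range f)"
    proof
      fix z assume "z \<in> A"
      then obtain i where "i < length xs" "z = xs ! i" using xs by (metis in_set_conv_nth)
      then show "z \<in> insert (xs ! 0) (range f)" by (metis f_def rangeI insertCI)
    qed
  qed
  then have "seqset X A" using lim unfolding seqset_def by blast
  then show ?thesis unfolding JJ_def by (intro CollectI exI[of _ "[A]"]) (auto simp: sumset_single)
qed

lemma group_ideal_JJ: "group_ideal (JJ X)"
  unfolding group_ideal_def
proof (intro conjI ballI allI impI)
  fix A :: "'a set" assume "finite A" then show "A \<in> JJ X" by (rule finite_in_JJ)
next
  fix A B assume "A \<in> JJ X" "B \<subseteq> A" then show "B \<in> JJ X" unfolding JJ_def by blast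
next
  fix A B assume "A \<in> JJ X" "B \<in> JJ X"
  then obtain Ks Ls where K: "\<forall>K\<in>set Ks. seqset X K" "A \<subseteq> sumset Ks"
    and L: "\<forall>K\<in>set Ls. seqset X K" "B \<subseteq> sumset Ls" unfolding JJ_def by blast
  have "\<forall>K\<in>set (Ks @ map ((`) uminus) Ls). seqset X K" using K L seqset_neg by auto
  moreover have "{a - b |a b. a \<in> A \<and> b \<in> B} \<subseteq> sumset (Ks @ map ((`) uminus) Ls)"
  proof safe
    fix a b assume "a \<in> A" "b \<in> B"
    then have "a + - b \<in> sumset (Ks @ map ((`) uminus) Ls)"
      using K L by (intro sumset_append sumset_neg) auto
    then show "a - b \<in> sumset (Ks @ map ((`) uminus) Ls)" by simp
  qed
  ultimately show "{a - b |a b. a \<in> A \<and> b \<in> B} \<in> JJ X" unfolding JJ_def by blast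
qed

lemma S_tau_JJ: "S_tau X \<subseteq> JJ X"
proof -
  have "JJ X \<in> {I. group_ideal I \<and> (\<forall>f x. limitin X f x sequentially \<longrightarrow> insert x (range f) \<in> I)}"
  proof (intro CollectI conjI allI impI group_ideal_JJ)
    fix f x assume "limitin X f x sequentially"
    then have "seqset X (insert x (range f))" unfolding seqset_def by blast
    then show "insert x (range f) \<in> JJ X" unfolding JJ_def
      by (intro CollectI exI[of _ "[insert x (range f)]"]) (auto simp: sumset_single)
  qed
  then show ?thesis unfolding S_tau_def by blast
qed

end


lemma stabilize:
  fixes R :: "nat \<Rightarrow> nat \<Rightarrow> 'b" and Z :: "nat set"
  assumes "infinite Z"
  shows "\<exists>Y\<subseteq>Z. infinite Y \<and> (\<forall>i<q. (\<forall>j\<in>Y. \<forall>j'\<in>Y. R j i = R j' i) \<or> inj_on (\<lambda>j. R j i) Y)"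
proof (induction q)
  case 0
  then show ?case using assms by blast
next
  case (Suc q)
  then obtain Y where Y: "Y \<subseteq> Z" "infinite Y"
    "\<forall>i<q. (\<forall>j\<in>Y. \<forall>j'\<in>Y. R j i = R j' i) \<or> inj_on (\<lambda>j. R j i) Y" by blast
  define f where "f S = (if \<forall>j\<in>S. \<forall>j'\<in>S. R j q = R j' q then 0 else (1::nat))" for S
  have "\<forall>x\<in>Y. \<forall>y\<in>Y. x \<noteq> y \<longrightarrow> f {x, y} < 2" by (simp add: f_def)
  from Ramsey2[OF Y(2) this] obtain Y' t where Y': "Y' \<subseteq> Y" "infinite Y'" "t < 2"
    "\<forall>x\<in>Y'. \<forall>y\<in>Y'. x \<noteq> y \<longrightarrow> f {x, y} = t" by blast
  have q: "(\<forall>j\<in>Y'. \<forall>j'\<in>Y'. R j q = R j' q) \<or> inj_on (\<lambda>j. R j q) Y'"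
  proof (cases "t = 0")
    case True
    then have "\<forall>j\<in>Y'. \<forall>j'\<in>Y'. R j q = R j' q"
      using Y'(4) unfolding f_def by (metis insert_iff one_neq_zero)
    then show ?thesis by blast
  next
    case False
    then have t1: "t = 1" using Y'(3) by auto
    have "inj_on (\<lambda>j. R j q) Y'"
    proof (rule inj_onI, rule ccontr)
      fix x y assume "x \<in> Y'" "y \<in> Y'" "R x q = R y q" "x \<noteq> y"
      then have "f {x, y} = 0" unfolding f_def by auto
      with Y'(4) \<open>x \<in> Y'\<close> \<open>y \<in> Y'\<close> \<open>x \<noteq> y\<close> t1 show False by auto
    qed
    then show ?thesis by blast
  qed
  have "\<forall>i<Suc q. (\<forall>j\<in>Y'. \<forall>j'\<in>Y'. R j i = R j' i) \<or> inj_on (\<lambda>j. R j i) Y'"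
  proof (intro allI impI)
    fix i assume "i < Suc q"
    then consider "i < q" | "i = q" by linarith
    then show "(\<forall>j\<in>Y'. \<forall>j'\<in>Y'. R j i = R j' i) \<or> inj_on (\<lambda>j. R j i) Y'"
    proof cases
      case 1
      with Y(3) Y'(1) show ?thesis by (meson inj_on_subset subsetD)
    next
      case 2
      with q show ?thesis by simp
    qed
  qed
  with Y Y' show ?case by blast
qed

locale tgrp_rep = tgrp X for X :: "'a::ab_group_add topology" +
  fixes m :: nat and Kl :: "nat \<Rightarrow> 'a set" and c :: "nat \<Rightarrow> 'a" and fs :: "nat \<Rightarrow> nat \<Rightarrow> 'a"
  assumes Kl: "\<And>i. i < m \<Longrightarrow> Kl i = insert (c i) (range (fs i))"
    and fsl: "\<And>i. i < m \<Longrightarrow> limitin X (fs i) (c i) sequentially"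
begin

definition good :: "'a \<Rightarrow> nat \<Rightarrow> bool" where
  "good w a \<longleftrightarrow> (\<exists>r. (\<forall>i<m. r i \<in> Kl i) \<and> w = (\<Sum>i<m. r i) \<and> a \<le> card {i. i < m \<and> r i = c i})"

lemma good_le: "good w a \<Longrightarrow> a \<le> m"
proof -
  assume "good w a"
  then obtain r where "a \<le> card {i. i < m \<and> r i = c i}" unfolding good_def by blast
  moreover have "card {i. i < m \<and> r i = c i} \<le> card {..<m}" by (intro card_mono) auto
  ultimately show "a \<le> m" by simp
qed

lemma LL:
  assumes ig: "inj g" and lg: "limitin X g w sequentially" and gg: "\<And>j. good (g j) a"
  shows "good w (Suc a)"
proof -
  have "\<forall>j. \<exists>r. (\<forall>i<m. r i \<in> Kl i) \<and> g j = (\<Sum>i<m. r i) \<and> a \<le> card {i. i < m \<and> r i = c i}"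
    using gg unfolding good_def by blast
  then obtain R where R: "\<And>j. (\<forall>i<m. R j i \<in> Kl i)" "\<And>j. g j = (\<Sum>i<m. R j i)"
    "\<And>j. a \<le> card {i. i < m \<and> R j i = c i}" by metis
  obtain Y where Y: "infinite Y"
    "\<forall>i<m. (\<forall>j\<in>Y. \<forall>j'\<in>Y. R j i = R j' i) \<or> inj_on (\<lambda>j. R j i) Y"
    using stabilize[where Z=UNIV and R=R and q=m] by auto
  define Q where "Q = {i. i < m \<and> inj_on (\<lambda>j. R j i) Y}"
  have Qf: "finite Q" unfolding Q_def by auto
  have cst: "\<And>i j j'. i < m \<Longrightarrow> i \<notin> Q \<Longrightarrow> j \<in> Y \<Longrightarrow> j' \<in> Y \<Longrightarrow> R j i = R j' i"
    using Y(2) unfolding Q_def by blast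
  have Qne: "Q \<noteq> {}"
  proof
    assume Q0: "Q = {}"
    from infinite_imp_nonempty[OF Y(1)] obtain j where j: "j \<in> Y" by blast
    have "infinite (Y - {j})" using Y(1) by simp
    from infinite_imp_nonempty[OF this] obtain j' where j': "j' \<in> Y - {j}" by blast
    have eqs: "\<And>i. i < m \<Longrightarrow> R j i = R j' i" using cst Q0 j j' by blast
    have "g j = g j'" unfolding R(2) by (intro sum.cong) (auto simp: eqs)
    then have "j = j'" by (rule injD[OF ig])
    then show False using j' by simp
  qed
  define Bad where "Bad = (\<Union>i\<in>Q. {j\<in>Y. R j i = c i})"
  have "finite Bad" unfolding Bad_def
  proof (intro finite_UN_I Qf)
    fix i assume "i \<in> Q"
    then have "inj_on (\<lambda>j. R j i) Y" unfolding Q_def by simp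
    then have inj: "inj_on (\<lambda>j. R j i) {j\<in>Y. R j i = c i}"
      by (rule inj_on_subset) blast
    show "finite {j\<in>Y. R j i = c i}"
      by (rule inj_on_finite[OF inj, of "{c i}"]) auto
  qed
  define Y2 where "Y2 = Y - Bad"
  have Y2: "infinite Y2" unfolding Y2_def using Y(1) \<open>finite Bad\<close> by simp
  define e where "e = enumerate Y2"
  have e: "strict_mono e" "\<And>k. e k \<in> Y2" using Y2 by (auto simp: e_def strict_mono_enumerate enumerate_in_set)
  have einj: "inj e" using e(1) strict_mono_imp_inj_on by blast
  define r where "r i = (if i \<in> Q then c i else R (e 0) i)" for i
  have limi: "limitin X (\<lambda>k. R (e k) i) (r i) sequentially" if i: "i < m" for i
  proof (cases "i \<in> Q")
    case True
    have "inj (\<lambda>k. R (e k) i)"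
    proof (rule injI)
      fix k k' assume eq: "R (e k) i = R (e k') i"
      have ek: "e k \<in> Y" "e k' \<in> Y" using e(2) unfolding Y2_def by auto
      have injY: "inj_on (\<lambda>j. R j i) Y" using True unfolding Q_def by simp
      have "e k = e k'" using inj_onD[OF injY _ ek] eq by simp
      then show "k = k'" by (rule injD[OF einj])
    qed
    moreover have "\<And>k. R (e k) i \<in> insert (c i) (range (fs i))" using R(1) Kl i by auto
    ultimately show ?thesis using inj_conv[OF fsl[OF i]] True by (simp add: r_def)
  next
    case False
    have "(\<lambda>k. R (e k) i) = (\<lambda>k. R (e 0) i)"
      using cst[OF i False] e(2) unfolding Y2_def by auto
    then show ?thesis using False by (simp add: r_def top)
  qed
  have l1: "limitin X (\<lambda>k. \<Sum>i<m. R (e k) i) (\<Sum>i<m. r i) sequentially"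
    by (rule lim_sum) (use limi in auto)
  have l2: "limitin X (\<lambda>k. \<Sum>i<m. R (e k) i) w sequentially"
    using limitin_subsequence[OF e(1) lg] by (simp add: o_def R(2))
  have weq: "w = (\<Sum>i<m. r i)" using lim_unique[OF l2 l1] .
  have rK: "\<forall>i<m. r i \<in> Kl i" using R(1) Kl by (auto simp: r_def)
  define S2 where "S2 = {i. i < m \<and> i \<notin> Q \<and> R (e 0) i = c i}"
  have e0: "e 0 \<notin> Bad" using e(2) unfolding Y2_def by auto
  have "{i. i < m \<and> R (e 0) i = c i} \<subseteq> S2"
    using e0 e(2) unfolding S2_def Bad_def Y2_def by auto
  moreover have fS2: "finite S2" by (simp add: S2_def)
  ultimately have "a \<le> card S2" using R(3)[of "e 0"] card_mono[OF fS2] by (meson le_trans)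
  moreover have "card Q \<ge> 1" using Qne Qf by (simp add: Suc_leI card_gt_0_iff)
  moreover have "{i. i < m \<and> r i = c i} \<supseteq> Q \<union> S2" unfolding S2_def r_def Q_def by auto
  moreover have "card (Q \<union> S2) = card Q + card S2"
    by (rule card_Un_disjoint) (auto simp: Qf S2_def)
  moreover have "card (Q \<union> S2) \<le> card {i. i < m \<and> r i = c i}"
    using calculation(3) by (intro card_mono) auto
  ultimately have "Suc a \<le> card {i. i < m \<and> r i = c i}" by linarith
  then show ?thesis unfolding good_def using rK weq by blast
qed

lemma MI:
  assumes ix: "inj x" and lx: "limitin X x 0 sequentially"
  shows "infinite J \<Longrightarrow> (\<forall>T. T \<subseteq> J \<and> finite T \<and> card T = h \<longrightarrow> good (y - sum x T) a) \<Longrightarrow> good y (a + h)"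
proof (induction h arbitrary: a)
  case 0
  then show ?case using "0.prems"(2)[rule_format, of "{}"] by simp
next
  case (Suc h)
  have "\<forall>T. T \<subseteq> J \<and> finite T \<and> card T = h \<longrightarrow> good (y - sum x T) (Suc a)"
  proof (intro allI impI)
    fix T assume T: "T \<subseteq> J \<and> finite T \<and> card T = h"
    define Z where "Z = J - T"
    have Z: "infinite Z" unfolding Z_def using Suc.prems(1) T by simp
    define e where "e = enumerate Z"
    have e: "strict_mono e" "\<And>k. e k \<in> Z" using Z by (auto simp: e_def strict_mono_enumerate enumerate_in_set)
    have einj: "inj e" using e(1) strict_mono_imp_inj_on by blast
    define g where "g k = y - sum x T - x (e k)" for k
    have "inj g" unfolding g_def using ix einj by (auto simp: inj_def)
    moreover have "limitin X g (y - sum x T - 0) sequentially"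
      unfolding g_def using lim_diff[OF lim_const limitin_subsequence[OF e(1) lx]] by (simp add: o_def)
    moreover have "good (g k) a" for k
    proof -
      have ek: "e k \<in> J" "e k \<notin> T" using e(2)[of k] unfolding Z_def by auto
      then have "insert (e k) T \<subseteq> J \<and> finite (insert (e k) T) \<and> card (insert (e k) T) = Suc h"
        using T by auto
      then have "good (y - sum x (insert (e k) T)) a" using Suc.prems(2) by blast
      moreover have "y - sum x (insert (e k) T) = g k"
        unfolding g_def using T ek by (simp add: sum.insert algebra_simps)
      ultimately show ?thesis by simp
    qed
    ultimately show "good (y - sum x T) (Suc a)" using LL by simp
  qed
  from Suc.IH[OF Suc.prems(1) this] show ?case by simp
qed

end



theorem theorem5:
  fixes X :: "'a::ab_group_add topology"
  assumes "topspace X = UNIV"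
    and "continuous_map (prod_topology X X) X (\<lambda>(x, y). x + y)"
    and "continuous_map X X uminus"
    and "Hausdorff_space X"
    and "\<exists>f x. limitin X f x sequentially \<and> \<not> (\<exists>N. \<forall>n\<ge>N. f n = f N)"
  shows "asdim UNIV (ideal_coarse (S_tau X)) = \<infinity>"
proof -
  interpret tgrp X using assms by unfold_locales auto
  from assms(5) obtain f x0 where lim: "limitin X f x0 sequentially"
    and ne: "\<not> (\<exists>N. \<forall>n\<ge>N. f n = f N)" by blast
  define Z where "Z = {j. f j \<noteq> x0}"
  have Zinf: "infinite Z"
  proof
    assume "finite Z"
    then obtain N where N: "\<And>j. j \<in> Z \<Longrightarrow> j < N" by (meson finite_nat_bounded lessThan_iff subsetD)
    have "\<forall>n\<ge>N. f n = f N"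
    proof (intro allI impI)
      fix n assume "N \<le> n"
      then have "n \<notin> Z" "N \<notin> Z" using N by (meson not_le order.refl)+
      then show "f n = f N" unfolding Z_def by simp
    qed
    with ne show False by blast
  qed
  obtain Y where Y: "Y \<subseteq> Z" "infinite Y"
    "\<forall>i<(1::nat). (\<forall>j\<in>Y. \<forall>j'\<in>Y. f j = f j') \<or> inj_on (\<lambda>j. f j) Y"
    using stabilize[where Z=Z and R="\<lambda>j i. f j" and q=1, OF Zinf] by blast
  define e where "e = enumerate Y"
  have e: "strict_mono e" "\<And>k. e k \<in> Y" using Y(2) by (auto simp: e_def strict_mono_enumerate enumerate_in_set)
  have einj: "inj e" using e(1) strict_mono_imp_inj_on by blast
  have limfe: "limitin X (\<lambda>k. f (e k)) x0 sequentially"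
    using limitin_subsequence[OF e(1) lim] by (simp add: o_def)
  have injfY: "inj_on f Y"
  proof -
    have "\<not> (\<forall>j\<in>Y. \<forall>j'\<in>Y. f j = f j')"
    proof
      assume c: "\<forall>j\<in>Y. \<forall>j'\<in>Y. f j = f j'"
      then have "(\<lambda>k. f (e k)) = (\<lambda>k. f (e 0))" using e(2) by auto
      then have "limitin X (\<lambda>k. f (e 0)) x0 sequentially" using limfe by simp
      moreover have "limitin X (\<lambda>k. f (e 0)) (f (e 0)) sequentially" by (simp add: top)
      ultimately have "f (e 0) = x0" using lim_unique by blast
      moreover have "e 0 \<in> Z" using e(2) Y(1) by auto
      ultimately show False unfolding Z_def by simp
    qed
    then show ?thesis using Y(3)[rule_format, of 0] by auto
  qed
  define x where "x k = f (e k) - x0" for k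
  have ix: "inj x"
  proof (rule injI)
    fix k k' assume "x k = x k'"
    then have "f (e k) = f (e k')" unfolding x_def by simp
    then have "e k = e k'" using inj_onD[OF injfY _ e(2) e(2)] by simp
    then show "k = k'" by (rule injD[OF einj])
  qed
  have lx: "limitin X x 0 sequentially"
    unfolding x_def using lim_diff[OF limfe lim_const, of x0] by simp
  define Kx where "Kx = insert 0 (range x)"
  have KxS: "Kx \<in> S_tau X" unfolding S_tau_def Kx_def using lx by blast
  define E0 where "E0 = {(u, v). u - v \<in> Kx}"
  have E0: "E0 \<in> ideal_coarse (S_tau X)" unfolding ideal_coarse_def E0_def using KxS by blast
  have notle: "\<not> asdim_le UNIV (ideal_coarse (S_tau X)) n" for n
  proof
    assume "asdim_le UNIV (ideal_coarse (S_tau X)) n"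
    then have H: "\<forall>E\<in>ideal_coarse (S_tau X). \<exists>F\<in>ideal_coarse (S_tau X). \<exists>M :: nat \<Rightarrow> 'a set set.
        \<Union>(\<Union>i\<le>n. M i) = UNIV \<and>
        (\<forall>i\<le>n. \<forall>A\<in>M i. \<exists>x. A \<subseteq> F `` {x}) \<and>
        (\<forall>i\<le>n. \<forall>A\<in>M i. \<forall>B\<in>M i. A \<noteq> B \<longrightarrow> E `` A \<inter> E `` B = {})"
      unfolding asdim_le_def .
    from bspec[OF H E0] obtain F where F: "F \<in> ideal_coarse (S_tau X)"
      and FM: "\<exists>M :: nat \<Rightarrow> 'a set set. (\<Union>(\<Union>i\<le>n. M i) = UNIV) \<and> (\<forall>i\<le>n. \<forall>A\<in>M i. \<exists>x. A \<subseteq> F `` {x}) \<and> (\<forall>i\<le>n. \<forall>A\<in>M i. \<forall>B\<in>M i. A \<noteq> B \<longrightarrow> E0 `` A \<inter> E0 `` B = {})"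
      by (rule bexE)
    from FM obtain M :: "nat \<Rightarrow> 'a set set" where MM: "(\<Union>(\<Union>i\<le>n. M i) = UNIV) \<and> (\<forall>i\<le>n. \<forall>A\<in>M i. \<exists>x. A \<subseteq> F `` {x}) \<and> (\<forall>i\<le>n. \<forall>A\<in>M i. \<forall>B\<in>M i. A \<noteq> B \<longrightarrow> E0 `` A \<inter> E0 `` B = {})"
      by (rule exE)
    have cov: "\<Union>(\<Union>i\<le>n. M i) = UNIV" using conjunct1[OF MM] .
    have bnd: "\<forall>i\<le>n. \<forall>A\<in>M i. \<exists>x. A \<subseteq> F `` {x}" using conjunct1[OF conjunct2[OF MM]] .
    have dis: "\<forall>i\<le>n. \<forall>A\<in>M i. \<forall>B\<in>M i. A \<noteq> B \<longrightarrow> E0 `` A \<inter> E0 `` B = {}" using conjunct2[OF conjunct2[OF MM]] .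
    from F obtain A where A: "A \<in> S_tau X" "F \<subseteq> {(x, y). x - y \<in> A}"
      unfolding ideal_coarse_def by blast
    from A(1) S_tau_JJ obtain Ks where Ks: "\<forall>K\<in>set Ks. seqset X K" "A \<subseteq> sumset Ks"
      unfolding JJ_def by blast
    define m where "m = length Ks"
    have "\<forall>i. \<exists>p. i < m \<longrightarrow> limitin X (fst p) (snd p) sequentially \<and> Ks ! i = insert (snd p) (range (fst p))"
    proof
      fix i
      show "\<exists>p. i < m \<longrightarrow> limitin X (fst p) (snd p) sequentially \<and> Ks ! i = insert (snd p) (range (fst p))"
      proof (cases "i < m")
        case True
        then have "seqset X (Ks ! i)" using Ks(1) unfolding m_def by simp
        then obtain g d where "limitin X g d sequentially" "Ks ! i = insert d (range g)"
          unfolding seqset_def by blast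
        then show ?thesis by (intro exI[of _ "(g, d)"]) simp
      qed simp
    qed
    from choice[OF this] obtain P where P: "\<forall>i. i < m \<longrightarrow> limitin X (fst (P i)) (snd (P i)) sequentially \<and> Ks ! i = insert (snd (P i)) (range (fst (P i)))"
      by blast
    define fs where "fs i = fst (P i)" for i
    define c where "c i = snd (P i)" for i
    have fc: "\<And>i. i < m \<Longrightarrow> limitin X (fs i) (c i) sequentially \<and> Ks ! i = insert (c i) (range (fs i))"
      using P unfolding fs_def c_def by blast
    interpret tgrp_rep X m "\<lambda>i. Ks ! i" c fs
      by unfold_locales (use fc in auto)
    have "\<forall>z. \<exists>p. fst p \<le> n \<and> snd p \<in> M (fst p) \<and> z \<in> snd p"
    proof
      fix z
      have "z \<in> \<Union>(\<Union>i\<le>n. M i)" using cov by simp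
      then obtain i W where "i \<le> n" "W \<in> M i" "z \<in> W" by blast
      then show "\<exists>p. fst p \<le> n \<and> snd p \<in> M (fst p) \<and> z \<in> snd p" by (intro exI[of _ "(i, W)"]) simp
    qed
    from choice[OF this] obtain PP where PP: "\<forall>z. fst (PP z) \<le> n \<and> snd (PP z) \<in> M (fst (PP z)) \<and> z \<in> snd (PP z)"
      by blast
    define col where "col z = fst (PP z)" for z
    define Wf where "Wf z = snd (PP z)" for z
    have cw: "\<And>z. col z \<le> n \<and> Wf z \<in> M (col z) \<and> z \<in> Wf z" using PP unfolding col_def Wf_def by blast
    have "\<exists>Y t. Y \<subseteq> UNIV \<and> infinite Y \<and> t < Suc n \<and>
        (\<forall>T. T \<subseteq> Y \<and> finite T \<and> card T = Suc m \<longrightarrow> col (sum x T) = t)"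
      by (rule Ramsey) (use cw in \<open>auto simp: less_Suc_eq_le\<close>)
    then obtain Y2 i0 where Y2: "infinite Y2" "i0 < Suc n"
      "\<And>T. T \<subseteq> Y2 \<Longrightarrow> finite T \<Longrightarrow> card T = Suc m \<Longrightarrow> col (sum x T) = i0" by blast
    have step: "Wf (sum x T) = Wf (sum x (insert b (T - {a})))"
      if T: "T \<subseteq> Y2" "finite T" "card T = Suc m" and a: "a \<in> T" and b: "b \<in> Y2" "b \<notin> T" for T a b
    proof (rule ccontr)
      define T1 where "T1 = insert b (T - {a})"
      have T1: "T1 \<subseteq> Y2" "finite T1" "card T1 = Suc m" using T a b unfolding T1_def
        by (auto simp: card_insert_if)
      assume neq: "Wf (sum x T) \<noteq> Wf (sum x (insert b (T - {a})))"
      have c1: "col (sum x T) = i0" "col (sum x T1) = i0" using Y2(3) T T1 by auto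
      have m1: "Wf (sum x T) \<in> M i0" "Wf (sum x T1) \<in> M i0" using cw[of "sum x T"] cw[of "sum x T1"] c1 by simp_all
      have i0n: "i0 \<le> n" using Y2(2) by simp
      define v where "v = sum x (T - {a})"
      have "sum x T = x a + v" unfolding v_def using T a by (simp add: sum.remove)
      moreover have "sum x T1 = x b + v" unfolding v_def T1_def using T a b by (simp add: sum.insert)
      ultimately have "(sum x T, v) \<in> E0" "(sum x T1, v) \<in> E0" unfolding E0_def Kx_def by auto
      then have "v \<in> E0 `` Wf (sum x T)" "v \<in> E0 `` Wf (sum x T1)" using cw by blast+
      with dis i0n m1 neq show False unfolding T1_def by blast
    qed
    have conn: "\<And>T. T \<subseteq> Y2 \<Longrightarrow> finite T \<Longrightarrow> card T = Suc m \<Longrightarrow> card (T - T') = k \<Longrightarrow> Wf (sum x T) = Wf (sum x T')"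
      if T': "T' \<subseteq> Y2" "finite T'" "card T' = Suc m" for T' k
    proof (induction k)
      case 0
      then have "T \<subseteq> T'" by auto
      then have "T = T'" by (rule card_subset_eq[OF T'(2)]) (use 0 T' in simp)
      then show ?case by simp
    next
      case (Suc k)
      have "T - T' \<noteq> {}"
      proof
        assume "T - T' = {}"
        then have "card (T - T') = 0" by (simp only: card.empty)
        then show False using Suc.prems(4) by simp
      qed
      then obtain a where a: "a \<in> T" "a \<notin> T'" by blast
      have "\<not> T' \<subseteq> T"
      proof
        assume "T' \<subseteq> T"
        then have "T' = T" by (rule card_subset_eq[OF Suc.prems(2)]) (use Suc.prems T' in simp)
        then show False using a by simp
      qed
      then obtain b where b: "b \<in> T'" "b \<notin> T" by blast
      define T1 where "T1 = insert b (T - {a})"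
      have T1: "T1 \<subseteq> Y2" "finite T1" "card T1 = Suc m" using Suc.prems a b T' unfolding T1_def
        by (auto simp: card_insert_if)
      have "T1 - T' = (T - T') - {a}" unfolding T1_def using a b by auto
      then have "card (T1 - T') = k" using Suc.prems a by (simp add: card_Diff_singleton)
      then have "Wf (sum x T1) = Wf (sum x T')" using Suc.IH T1 by blast
      moreover have "Wf (sum x T) = Wf (sum x T1)" unfolding T1_def
        using step[OF Suc.prems(1-3) a(1)] b T' by auto
      ultimately show ?case by simp
    qed
    obtain T0 where T0: "finite T0" "card T0 = Suc m" "T0 \<subseteq> Y2"
      using infinite_arbitrarily_large[OF Y2(1)] by blast
    define W0 where "W0 = Wf (sum x T0)"
    have "W0 \<in> M i0" unfolding W0_def using cw[of "sum x T0"] Y2(3)[OF T0(3,1,2)] by simp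
    moreover have "i0 \<le> n" using Y2(2) by simp
    ultimately obtain x1 where x1: "W0 \<subseteq> F `` {x1}" using bnd by blast
    have "good (x1 - sum x T) 0" if T: "T \<subseteq> Y2 \<and> finite T \<and> card T = Suc m" for T
    proof -
      have "Wf (sum x T) = W0" unfolding W0_def using conn[OF T0(3,1,2)] T by blast
      then have "sum x T \<in> W0" using cw[of "sum x T"] by simp
      then have "(x1, sum x T) \<in> F" using x1 by auto
      then have "x1 - sum x T \<in> sumset Ks" using A(2) Ks(2) by auto
      then obtain r where r: "x1 - sum x T = (\<Sum>i<m. r i)" "\<forall>i<m. r i \<in> Ks ! i"
        unfolding sumset_def m_def by auto
      show ?thesis unfolding good_def by (intro exI[of _ r]) (use r in simp)
    qed
    then have "good x1 (0 + Suc m)" using MI[OF ix lx Y2(1)] by blast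
    then show False using good_le by fastforce
  qed
  have e: "{n. asdim_le UNIV (ideal_coarse (S_tau X)) n} = {}" using notle by blast
  show ?thesis unfolding asdim_def e by (simp add: top_enat_def)
qed

end
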